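(* Every regular triangulation of $[0,1]^L$ is induced by some generic fitness landscape $w:\{0,1\}^L\to\mathbb{R}_{\ge 0}$ that has exactly one peak.
   Context: Genotypes $g\in\{0,1\}^L$ are vertices of $[0,1]^L$. The triangulation induced by $w$ is the regular subdivision of $[0,1]^L$ obtained by projecting the upper faces of $\mathrm{conv}\{(g,w_g)\}\subset\mathbb{R}^{L+1}$; a triangulation is regular if induced in this way; $w$ is generic if all $w_g$ are distinct and the induced subdivision is a triangulation. A peak is a genotype all of whose Hamming neighbours have strictly lower fitness. *)

theory Defs
  imports "HOL-Analysis.Analysis"
begin

text \<open>The cube [0,1]^L is modelled in real^'n with L = CARD('n).
  Genotypes are the 0/1 vertices. A fitness landscape is a function
  w :: real^'n => real; only its values on genotypes matter.\<close>

definition genotypes :: "(real^'n::finite) set" where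
  "genotypes = {x. \<forall>i. x $ i = 0 \<or> x $ i = 1}"

text \<open>Cells of the regular subdivision induced by w: the (nonempty) sets of
  genotypes whose lifts lie on an upper face of conv{(g, w g)}, i.e. on a
  non-vertical affine hyperplane lying weakly above all lifted points.
  Each cell is recorded by its set of (marked) genotypes.\<close>

definition induced_subdivision :: "((real^'n::finite) \<Rightarrow> real) \<Rightarrow> (real^'n) set set" where
  "induced_subdivision w =
     {S. S \<noteq> {} \<and> (\<exists>a b. (\<forall>g\<in>genotypes. w g \<le> a \<bullet> g + b) \<and>
                        S = {g\<in>genotypes. w g = a \<bullet> g + b})}"

definition is_triangulation :: "(real^'n::finite) set set \<Rightarrow> bool" where
  "is_triangulation T \<longleftrightarrow> (\<forall>S\<in>T. \<not> affine_dependent S)"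

definition regular_triangulation :: "(real^'n::finite) set set \<Rightarrow> bool" where
  "regular_triangulation T \<longleftrightarrow>
     (\<exists>w. induced_subdivision w = T) \<and> is_triangulation T"

definition generic :: "((real^'n::finite) \<Rightarrow> real) \<Rightarrow> bool" where
  "generic w \<longleftrightarrow> inj_on w genotypes \<and> is_triangulation (induced_subdivision w)"

definition hamming_neighbours :: "real^'n::finite \<Rightarrow> real^'n \<Rightarrow> bool" where
  "hamming_neighbours g h \<longleftrightarrow> card {i. g $ i \<noteq> h $ i} = 1"

definition is_peak :: "((real^'n::finite) \<Rightarrow> real) \<Rightarrow> real^'n \<Rightarrow> bool" where
  "is_peak w g \<longleftrightarrow> g \<in> genotypes \<and>
     (\<forall>h\<in>genotypes. hamming_neighbours g h \<longrightarrow> w h < w g)"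

end

theory Submission
  imports Defs
begin

lemma sub_shift:
  fixes w0 :: "(real^'n::finite) \<Rightarrow> real"
  shows "induced_subdivision (\<lambda>g. w0 g + a \<bullet> g + b) = induced_subdivision w0"
proof -
  have "(\<exists>a' b'. (\<forall>g\<in>genotypes. w0 g + a \<bullet> g + b \<le> a' \<bullet> g + b') \<and>
                 S = {g\<in>genotypes. w0 g + a \<bullet> g + b = a' \<bullet> g + b'}) \<longleftrightarrow>
        (\<exists>a' b'. (\<forall>g\<in>genotypes. w0 g \<le> a' \<bullet> g + b') \<and>
                 S = {g\<in>genotypes. w0 g = a' \<bullet> g + b'})" for S
  proof
    assume "\<exists>a' b'. (\<forall>g\<in>genotypes. w0 g + a \<bullet> g + b \<le> a' \<bullet> g + b') \<and>
                 S = {g\<in>genotypes. w0 g + a \<bullet> g + b = a' \<bullet> g + b'}"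
    then obtain a' b' where h: "\<forall>g\<in>genotypes. w0 g + a \<bullet> g + b \<le> a' \<bullet> g + b'"
      "S = {g\<in>genotypes. w0 g + a \<bullet> g + b = a' \<bullet> g + b'}" by blast
    show "\<exists>a' b'. (\<forall>g\<in>genotypes. w0 g \<le> a' \<bullet> g + b') \<and>
                 S = {g\<in>genotypes. w0 g = a' \<bullet> g + b'}"
    proof (rule exI[of _ "a' - a"], rule exI[of _ "b' - b"], intro conjI ballI)
      fix g :: "real^'n" assume "g \<in> genotypes"
      then show "w0 g \<le> (a' - a) \<bullet> g + (b' - b)" using h(1) unfolding inner_diff_left by fastforce
    next
      have "\<And>g. (w0 g + a \<bullet> g + b = a' \<bullet> g + b') \<longleftrightarrow> (w0 g = (a' - a) \<bullet> g + (b' - b))"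
        unfolding inner_diff_left by linarith
      then show "S = {g\<in>genotypes. w0 g = (a' - a) \<bullet> g + (b' - b)}" using h(2) by simp
    qed
  next
    assume "\<exists>a' b'. (\<forall>g\<in>genotypes. w0 g \<le> a' \<bullet> g + b') \<and>
                 S = {g\<in>genotypes. w0 g = a' \<bullet> g + b'}"
    then obtain a' b' where h: "\<forall>g\<in>genotypes. w0 g \<le> a' \<bullet> g + b'"
      "S = {g\<in>genotypes. w0 g = a' \<bullet> g + b'}" by blast
    show "\<exists>a'' b''. (\<forall>g\<in>genotypes. w0 g + a \<bullet> g + b \<le> a'' \<bullet> g + b'') \<and>
                 S = {g\<in>genotypes. w0 g + a \<bullet> g + b = a'' \<bullet> g + b''}"
    proof (rule exI[of _ "a' + a"], rule exI[of _ "b' + b"], intro conjI ballI)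
      fix g :: "real^'n" assume "g \<in> genotypes"
      then show "w0 g + a \<bullet> g + b \<le> (a' + a) \<bullet> g + (b' + b)" using h(1) unfolding inner_add_left by fastforce
    next
      have "\<And>g. (w0 g + a \<bullet> g + b = (a' + a) \<bullet> g + (b' + b)) \<longleftrightarrow> (w0 g = a' \<bullet> g + b')"
        unfolding inner_add_left by linarith
      then show "S = {g\<in>genotypes. w0 g + a \<bullet> g + b = (a' + a) \<bullet> g + (b' + b)}" using h(2) by simp
    qed
  qed
  then show ?thesis unfolding induced_subdivision_def by auto
qed

lemma finite_genotypes: "finite (genotypes :: (real^'n::finite) set)"
proof -
  have "genotypes \<subseteq> (\<lambda>S. (\<chi> i. if i \<in> S then 1 else 0) :: real^'n) ` UNIV"
  proof
    fix x :: "real^'n" assume "x \<in> genotypes"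
    then have "x = (\<chi> i. if i \<in> {i. x $ i = 1} then 1 else 0)"
      unfolding genotypes_def by (auto simp: vec_eq_iff)
    then show "x \<in> range (\<lambda>S. (\<chi> i. if i \<in> S then 1 else 0) :: real^'n)" by blast
  qed
  then show ?thesis by (rule finite_subset) simp
qed

lemma binary_nonzero:
  fixes e :: "'n::finite \<Rightarrow> int" and r :: "'n \<Rightarrow> nat"
  assumes inj: "inj r" and e: "\<And>i. e i \<in> {-1,0,1}" and nz: "e j \<noteq> 0"
  shows "(\<Sum>i\<in>UNIV. e i * 2 ^ r i) \<noteq> 0"
proof
  assume s0: "(\<Sum>i\<in>UNIV. e i * 2 ^ r i) = 0"
  obtain i0 where i0: "e i0 \<noteq> 0" "\<And>j. e j \<noteq> 0 \<Longrightarrow> r i0 \<le> r j"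
    using ex_has_least_nat[of "\<lambda>i. e i \<noteq> 0" j r] nz by blast
  have d: "(2::int) ^ (Suc (r i0)) dvd e j * 2 ^ r j" if "j \<in> UNIV - {i0}" for j
  proof (cases "e j = 0")
    case False
    then have "r i0 \<le> r j" using i0 by blast
    moreover have "r i0 \<noteq> r j" using inj that unfolding inj_def by blast
    ultimately have "Suc (r i0) \<le> r j" by simp
    then have "(2::int) ^ Suc (r i0) dvd 2 ^ r j" by (rule le_imp_power_dvd)
    then show ?thesis by simp
  qed simp
  have "(\<Sum>i\<in>UNIV. e i * 2 ^ r i) = e i0 * 2 ^ r i0 + (\<Sum>i\<in>UNIV - {i0}. e i * 2 ^ r i)"
    by (rule sum.remove) auto
  moreover have "(2::int) ^ (Suc (r i0)) dvd (\<Sum>i\<in>UNIV - {i0}. e i * 2 ^ r i)"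
    using d by (rule dvd_sum)
  ultimately have "e i0 * 2 ^ r i0 = - (\<Sum>i\<in>UNIV - {i0}. e i * 2 ^ r i)"
    and dr: "(2::int) ^ (Suc (r i0)) dvd (\<Sum>i\<in>UNIV - {i0}. e i * 2 ^ r i)"
    using s0 by linarith+
  then have "(2::int) ^ (Suc (r i0)) dvd e i0 * 2 ^ r i0"
    by (simp only: dvd_minus_iff)
  then have "2 * 2 ^ r i0 dvd e i0 * 2 ^ r i0" by simp
  then have "(2::int) dvd e i0" by (simp add: mult.commute)
  moreover have "e i0 = 1 \<or> e i0 = -1" using e[of i0] i0(1) by auto
  ultimately show False by auto
qed

theorem corollary1:
  fixes T :: "(real^'n::finite) set set"
  assumes "regular_triangulation T"
  shows "\<exists>w :: real^'n \<Rightarrow> real.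
           generic w \<and> (\<forall>g\<in>genotypes. 0 \<le> w g) \<and>
           induced_subdivision w = T \<and>
           card {g. is_peak w g} = 1"
proof -
  obtain w0 :: "real^'n \<Rightarrow> real" where w0: "induced_subdivision w0 = T" and tri: "is_triangulation T"
    using assms unfolding regular_triangulation_def by blast
  obtain r :: "'n \<Rightarrow> nat" and N where "r ` UNIV = {i. i < N}" "inj_on r UNIV"
    using finite_imp_inj_to_nat_seg[of "UNIV :: 'n set"] by auto
  then have inj: "inj r" by simp
  define B where "B = Max ((\<lambda>g. \<bar>w0 g\<bar>) ` genotypes)"
  have B: "\<bar>w0 g\<bar> \<le> B" if "g \<in> genotypes" for g
    unfolding B_def using that finite_genotypes by (intro Max_ge) auto
  define M where "M = 2 * B + 1"
  define c where "c i = M * 2 ^ r i" for i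
  define a :: "real^'n" where "a = (\<chi> i. c i)"
  define w where "w g = w0 g + a \<bullet> g + B" for g
  have adot: "a \<bullet> g = (\<Sum>i\<in>UNIV. c i * g $ i)" for g
    by (simp add: a_def inner_vec_def)
  have gen01: "g $ i = 0 \<or> g $ i = 1" if "g \<in> genotypes" for g i
    using that unfolding genotypes_def by blast
  have diffB: "w0 h - w0 g < M" if "g \<in> genotypes" "h \<in> genotypes" for g h
    using B[OF that(1)] B[OF that(2)] unfolding M_def by linarith
  have Mpos: "M \<ge> 1" using B[of 0] unfolding M_def genotypes_def by fastforce
  have sub: "induced_subdivision w = T"
    unfolding w_def[abs_def] using sub_shift[of w0 a B] w0 by simp
  have injw: "inj_on w genotypes"
  proof (rule inj_onI, rule ccontr)
    fix g h assume g: "g \<in> genotypes" and h: "h \<in> genotypes" and eq: "w g = w h" and ne: "g \<noteq> h"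
    define e where "e i = (if g $ i = 1 then 1 else 0) - (if h $ i = 1 then 1 else (0::int))" for i
    have ge: "g $ i - h $ i = of_int (e i)" for i
      using gen01[OF g, of i] gen01[OF h, of i] unfolding e_def by auto
    have e3: "e i \<in> {-1,0,1}" for i unfolding e_def by auto
    obtain j where "g $ j \<noteq> h $ j" using ne by (auto simp: vec_eq_iff)
    then have "e j \<noteq> 0" using ge[of j] by auto
    then have D: "(\<Sum>i\<in>UNIV. e i * 2 ^ r i) \<noteq> 0" using binary_nonzero[of r e j] inj e3 by blast
    define D where "D = (\<Sum>i\<in>UNIV. e i * 2 ^ r i)"
    have "\<bar>D\<bar> \<ge> 1" using D unfolding D_def by linarith
    then have D1: "\<bar>real_of_int D\<bar> \<ge> 1" by linarith
    have "a \<bullet> g - a \<bullet> h = (\<Sum>i\<in>UNIV. c i * (g $ i - h $ i))"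
      unfolding adot by (simp add: sum_subtractf algebra_simps)
    also have "\<dots> = M * real_of_int D"
      unfolding D_def c_def ge by (simp add: sum_distrib_left algebra_simps)
    finally have ad: "a \<bullet> g - a \<bullet> h = M * real_of_int D" .
    have "\<bar>M * real_of_int D\<bar> \<ge> M" using D1 Mpos by (simp add: abs_mult)
    moreover have "M * real_of_int D = w0 h - w0 g" using eq ad unfolding w_def by linarith
    ultimately show False using diffB[OF g h] diffB[OF h g] by linarith
  qed
  have nonneg: "\<forall>g\<in>genotypes. 0 \<le> w g"
  proof
    fix g :: "real^'n" assume g: "g \<in> genotypes"
    have cn: "0 \<le> c i" for i unfolding c_def using Mpos by simp
    have gn: "0 \<le> g $ i" for i using gen01[OF g, of i] by auto
    have "0 \<le> a \<bullet> g" unfolding adot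
      using cn gn by (intro sum_nonneg mult_nonneg_nonneg)
    then show "0 \<le> w g" using B[OF g] unfolding w_def by linarith
  qed
  define one :: "real^'n" where "one = (\<chi> i. 1)"
  have peaks: "{g. is_peak w g} = {one}"
  proof (rule set_eqI, rule iffI)
    fix g assume pk: "g \<in> {g. is_peak w g}"
    then have g: "g \<in> genotypes" unfolding is_peak_def by blast
    show "g \<in> {one}"
    proof (rule ccontr)
      assume "g \<notin> {one}"
      then obtain i where gi: "g $ i \<noteq> 1" by (auto simp: one_def vec_eq_iff)
      then have gi0: "g $ i = 0" using gen01[OF g] by blast
      define h :: "real^'n" where "h = (\<chi> j. if j = i then 1 else g $ j)"
      have h: "h \<in> genotypes" using g unfolding h_def genotypes_def by auto
      have "{j. g $ j \<noteq> h $ j} = {i}" using gi unfolding h_def by auto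
      then have hn: "hamming_neighbours g h" unfolding hamming_neighbours_def by simp
      have hd: "h $ j - g $ j = (if j = i then 1 else 0)" for j
        unfolding h_def using gi0 by auto
      have "a \<bullet> h - a \<bullet> g = (\<Sum>j\<in>UNIV. c j * (h $ j - g $ j))"
        unfolding adot by (simp add: sum_subtractf algebra_simps)
      also have "\<dots> = c i" unfolding hd by (simp add: if_distrib cong: if_cong)
      finally have "a \<bullet> h - a \<bullet> g = c i" .
      moreover have "c i \<ge> M" unfolding c_def using Mpos by simp
      ultimately have "w g < w h" using diffB[OF h g] unfolding w_def by linarith
      moreover have "w h < w g" using pk h hn unfolding is_peak_def by blast
      ultimately show False by linarith
    qed
  next
    fix g assume "g \<in> {one}"
    then have g1: "g = one" by simp
    have onegen: "one \<in> genotypes" unfolding one_def genotypes_def by simp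
    have "is_peak w one" unfolding is_peak_def
    proof (intro conjI ballI impI onegen)
      fix h :: "real^'n" assume h: "h \<in> genotypes" and hn: "hamming_neighbours one h"
      obtain i where I: "{j. one $ j \<noteq> h $ j} = {i}"
        using hn unfolding hamming_neighbours_def by (auto simp: card_1_singleton_iff)
      have hd: "one $ j - h $ j = (if j = i then 1 else 0)" for j
      proof (cases "j = i")
        case True
        then have "h $ j \<noteq> 1" using I by (auto simp: one_def)
        then have "h $ j = 0" using gen01[OF h] by blast
        then show ?thesis using True by (simp add: one_def)
      next
        case False
        then have "j \<notin> {j. one $ j \<noteq> h $ j}" using I by blast
        then have "h $ j = one $ j" by simp
        then show ?thesis using False by simp
      qed
      have "a \<bullet> one - a \<bullet> h = (\<Sum>j\<in>UNIV. c j * (one $ j - h $ j))"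
        unfolding adot by (simp add: sum_subtractf algebra_simps)
      also have "\<dots> = c i" unfolding hd by (simp add: if_distrib cong: if_cong)
      finally have "a \<bullet> one - a \<bullet> h = c i" .
      moreover have "c i \<ge> M" unfolding c_def using Mpos by simp
      ultimately show "w h < w one" using diffB[OF onegen h] unfolding w_def by linarith
    qed
    then show "g \<in> {g. is_peak w g}" using g1 by simp
  qed
  show ?thesis
    apply (rule exI[of _ w])
    using injw tri sub nonneg peaks unfolding generic_def by simp
qed

end
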